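(* Let $\mu_1,\dots,\mu_{n_{\mathcal Q}}\in[-1,1]$ be distinct quadrature nodes including $\mu=0$, and let $\mathbf m_1(\mu)=(\mu,\mu^2,\dots,\mu^N)^T$. Let $A_\pm,b_\pm$ be half-space representations $$\operatorname{co}\{\mathbf m_1(\mu_i)\}_{\mu_i\ge0}=\{\mathbf u_{1+}:A_+\mathbf u_{1+}\le b_+\},\qquad \operatorname{co}\{\mathbf m_1(\mu_i)\}_{\mu_i\le0}=\{\mathbf u_{1-}:A_-\mathbf u_{1-}\le b_-\},$$ with rows $\mathbf a_{\pm i}^T$ of $A_\pm$, and assume $b_\pm\ge0$ componentwise. Then the closure of the normalized numerically realizable set for the mixed-moment basis, $$\overline{\mathcal R}^{\mathrm{mix}}|_{u_0=1}:=\operatorname{co}\Big(\{(\mathbf m_1(\mu_i),0):\mu_i\ge0\}\cup\{(0,\mathbf m_1(\mu_i)):\mu_i\le0\}\Big)\subset\mathbb R^{2N},$$ equals $\{\mathbf u_1=(\mathbf u_{1+},\mathbf u_{1-}):A\mathbf u_1\le b\}$, where the inequalities are: $A_+\mathbf u_{1+}\le b_+$; $A_-\mathbf u_{1-}\le b_-$; and, for every pair $(i,j)$ with $b_{+i}\neq0$ and $b_{-j}\neq0$, $b_{+i}^{-1}\mathbf a_{+i}^T\mathbf u_{1+}+b_{-j}^{-1}\mathbf a_{-j}^T\mathbf u_{1-}\le1$.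
   Context: The mixed-moment basis is $(1,\mu_+,\mu_-,\dots,\mu_+^N,\mu_-^N)^T$ with $\mu_+=\max(\mu,0)$, $\mu_-=\min(\mu,0)$; after dropping the constant component and ordering the remaining components as $(\mathbf u_{1+},\mathbf u_{1-})$ (positive-half moments, then negative-half moments), the basis evaluated at a node $\mu_i\ge0$ is $(\mathbf m_1(\mu_i),0)$ and at $\mu_i\le0$ is $(0,\mathbf m_1(\mu_i))$. $\operatorname{co}$ denotes convex hull; vector inequalities are componentwise. *)

theory Defs
  imports "HOL-Analysis.Analysis"
begin

text \<open>Moment vector m_1(mu) = (mu, mu^2, ..., mu^N) in R^N, where R^N is modelled as
  real^'n with N = CARD('n), and the coordinate k carries the exponent e k, e being a
  bijection from the index type onto {1..N}.\<close>
definition m1 :: "('n::finite \<Rightarrow> nat) \<Rightarrow> real \<Rightarrow> real ^ 'n" where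
  "m1 e \<mu> = (\<chi> k. \<mu> ^ e k)"

end

theory Submission
  imports Defs
begin

lemma scale_lemma:
  fixes a :: "nat \<Rightarrow> 'a::real_inner" and b :: "nat \<Rightarrow> real"
  assumes bnd: "bounded {u. \<forall>i<M. a i \<bullet> u \<le> b i}"
    and bnn: "\<forall>i<M. b i \<ge> 0"
    and x0: "x0 \<in> {u. \<forall>i<M. a i \<bullet> u \<le> b i}"
    and u: "\<forall>i<M. a i \<bullet> u \<le> b i"
    and al: "0 \<le> \<alpha>"
    and ub: "\<forall>i<M. b i \<noteq> 0 \<longrightarrow> a i \<bullet> u / b i \<le> \<alpha>"
  shows "\<exists>x \<in> {u. \<forall>i<M. a i \<bullet> u \<le> b i}. u = \<alpha> *\<^sub>R x"
proof (cases "\<alpha> = 0")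
  case False
  hence ap: "\<alpha> > 0" using al by simp
  have "\<forall>i<M. a i \<bullet> (inverse \<alpha> *\<^sub>R u) \<le> b i"
  proof (intro allI impI)
    fix i assume i: "i < M"
    show "a i \<bullet> (inverse \<alpha> *\<^sub>R u) \<le> b i"
    proof (cases "b i = 0")
      case True
      hence "a i \<bullet> u \<le> 0" using u[rule_format, OF i] by simp
      then show ?thesis using ap True by (simp add: mult_nonneg_nonpos)
    next
      case False
      hence "b i > 0" using bnn i by force
      hence "a i \<bullet> u \<le> \<alpha> * b i" using ub i False by (simp add: divide_le_eq)
      then show ?thesis using ap by (simp add: field_simps)
    qed
  qed
  moreover have "u = \<alpha> *\<^sub>R (inverse \<alpha> *\<^sub>R u)" using ap by simp
  ultimately show ?thesis by blast
next
  case True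
  have neg: "\<forall>i<M. a i \<bullet> u \<le> 0"
  proof (intro allI impI)
    fix i assume i: "i < M"
    show "a i \<bullet> u \<le> 0"
    proof (cases "b i = 0")
      case True then show ?thesis using u[rule_format, OF i] by simp
    next
      case False
      hence "b i > 0" using bnn i by force
      moreover have "a i \<bullet> u / b i \<le> 0" using ub[rule_format, OF i False] True by simp
      ultimately show ?thesis by (simp add: divide_le_0_iff)
    qed
  qed
  have "u = 0"
  proof (rule ccontr)
    assume nz: "u \<noteq> 0"
    obtain B where B: "B > 0" "\<forall>x\<in>{u. \<forall>i<M. a i \<bullet> u \<le> b i}. norm x \<le> B"
      using bnd bounded_pos by blast
    define t where "t = (B + 1) / norm u"
    have tp: "t > 0" using B nz by (simp add: t_def)
    have "t *\<^sub>R u \<in> {u. \<forall>i<M. a i \<bullet> u \<le> b i}"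
    proof (simp, intro allI impI)
      fix i assume i: "i < M"
      have "t * (a i \<bullet> u) \<le> 0" using neg[rule_format, OF i] tp by (simp add: mult_nonneg_nonpos)
      thus "t * (a i \<bullet> u) \<le> b i" using bnn[rule_format, OF i] by linarith
    qed
    hence "norm (t *\<^sub>R u) \<le> B" using B by blast
    moreover have "norm (t *\<^sub>R u) = B + 1" using nz tp B by (simp add: t_def)
    ultimately show False by simp
  qed
  thus ?thesis using x0 True by auto
qed

theorem mainTheorem6:
  fixes Q :: "real set" and e :: "'n::finite \<Rightarrow> nat"
    and Mp Mm :: nat
    and ap am :: "nat \<Rightarrow> real ^ 'n" and bp bm :: "nat \<Rightarrow> real"
  assumes e_bij: "bij_betw e UNIV {1..CARD('n)}"
    and Q_fin: "finite Q" and Q_range: "Q \<subseteq> {-1..1}" and Q_zero: "0 \<in> Q"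
    and hrep_p: "convex hull (m1 e ` {\<mu>\<in>Q. \<mu> \<ge> 0}) = {u. \<forall>i<Mp. ap i \<bullet> u \<le> bp i}"
    and hrep_m: "convex hull (m1 e ` {\<mu>\<in>Q. \<mu> \<le> 0}) = {u. \<forall>j<Mm. am j \<bullet> u \<le> bm j}"
    and bp_nonneg: "\<forall>i<Mp. bp i \<ge> 0"
    and bm_nonneg: "\<forall>j<Mm. bm j \<ge> 0"
  shows "convex hull ((\<lambda>\<mu>. (m1 e \<mu>, 0)) ` {\<mu>\<in>Q. \<mu> \<ge> 0} \<union> (\<lambda>\<mu>. (0, m1 e \<mu>)) ` {\<mu>\<in>Q. \<mu> \<le> 0})
       = {(up, um). (\<forall>i<Mp. ap i \<bullet> up \<le> bp i) \<and> (\<forall>j<Mm. am j \<bullet> um \<le> bm j) \<and>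
            (\<forall>i<Mp. \<forall>j<Mm. bp i \<noteq> 0 \<longrightarrow> bm j \<noteq> 0 \<longrightarrow>
               (ap i \<bullet> up) / bp i + (am j \<bullet> um) / bm j \<le> 1)}"
  (is "convex hull (?A \<union> ?B) = ?R")
proof
  define Pp where "Pp = {u. \<forall>i<Mp. ap i \<bullet> u \<le> bp i}"
  define Pm where "Pm = {u. \<forall>j<Mm. am j \<bullet> u \<le> bm j}"
  show "convex hull (?A \<union> ?B) \<subseteq> ?R"
  proof (rule hull_minimal)
    show "?A \<union> ?B \<subseteq> ?R"
    proof
      fix z assume "z \<in> ?A \<union> ?B"
      then show "z \<in> ?R"
      proof
        assume "z \<in> ?A"
        then obtain \<mu> where mu: "\<mu> \<in> {\<mu>\<in>Q. \<mu> \<ge> 0}" and z: "z = (m1 e \<mu>, 0)" by blast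
        have "m1 e \<mu> \<in> convex hull (m1 e ` {\<mu>\<in>Q. \<mu> \<ge> 0})"
          by (rule hull_inc) (use mu in blast)
        hence "m1 e \<mu> \<in> Pp" using hrep_p unfolding Pp_def by simp
        hence h: "\<forall>i<Mp. ap i \<bullet> m1 e \<mu> \<le> bp i" unfolding Pp_def by simp
        have "\<forall>i<Mp. bp i \<noteq> 0 \<longrightarrow> ap i \<bullet> m1 e \<mu> / bp i \<le> 1"
        proof (intro allI impI)
          fix i assume "i < Mp" "bp i \<noteq> 0"
          hence "bp i > 0" "ap i \<bullet> m1 e \<mu> \<le> bp i" using bp_nonneg h by force+
          thus "ap i \<bullet> m1 e \<mu> / bp i \<le> 1" by simp
        qed
        thus ?thesis using z h bm_nonneg by auto
      next
        assume "z \<in> ?B"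
        then obtain \<mu> where mu: "\<mu> \<in> {\<mu>\<in>Q. \<mu> \<le> 0}" and z: "z = (0, m1 e \<mu>)" by blast
        have "m1 e \<mu> \<in> convex hull (m1 e ` {\<mu>\<in>Q. \<mu> \<le> 0})"
          by (rule hull_inc) (use mu in blast)
        hence "m1 e \<mu> \<in> Pm" using hrep_m unfolding Pm_def by simp
        hence h: "\<forall>j<Mm. am j \<bullet> m1 e \<mu> \<le> bm j" unfolding Pm_def by simp
        have "\<forall>j<Mm. bm j \<noteq> 0 \<longrightarrow> am j \<bullet> m1 e \<mu> / bm j \<le> 1"
        proof (intro allI impI)
          fix j assume "j < Mm" "bm j \<noteq> 0"
          hence "bm j > 0" "am j \<bullet> m1 e \<mu> \<le> bm j" using bm_nonneg h by force+
          thus "am j \<bullet> m1 e \<mu> / bm j \<le> 1" by simp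
        qed
        thus ?thesis using z h bp_nonneg by auto
      qed
    qed
    show "convex ?R"
      unfolding convex_def
    proof (intro ballI allI impI)
      fix x y :: "(real^'n) \<times> (real^'n)" and u v :: real
      assume x: "x \<in> ?R" and y: "y \<in> ?R" and uv: "0 \<le> u" "0 \<le> v" "u + v = 1"
      obtain x1 x2 where xx: "x = (x1, x2)" by fastforce
      obtain y1 y2 where yy: "y = (y1, y2)" by fastforce
      have c1: "\<forall>i<Mp. ap i \<bullet> (u *\<^sub>R x1 + v *\<^sub>R y1) \<le> bp i"
      proof (intro allI impI)
        fix i assume i: "i < Mp"
        have "ap i \<bullet> x1 \<le> bp i" "ap i \<bullet> y1 \<le> bp i" using x y xx yy i by auto
        hence "u * (ap i \<bullet> x1) + v * (ap i \<bullet> y1) \<le> u * bp i + v * bp i"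
          using uv by (intro add_mono mult_left_mono) auto
        also have "\<dots> = (u + v) * bp i" by (simp add: algebra_simps)
        also have "\<dots> = bp i" using uv by simp
        finally show "ap i \<bullet> (u *\<^sub>R x1 + v *\<^sub>R y1) \<le> bp i" by (simp add: inner_add_right)
      qed
      have c2: "\<forall>j<Mm. am j \<bullet> (u *\<^sub>R x2 + v *\<^sub>R y2) \<le> bm j"
      proof (intro allI impI)
        fix i assume i: "i < Mm"
        have "am i \<bullet> x2 \<le> bm i" "am i \<bullet> y2 \<le> bm i" using x y xx yy i by auto
        hence "u * (am i \<bullet> x2) + v * (am i \<bullet> y2) \<le> u * bm i + v * bm i"
          using uv by (intro add_mono mult_left_mono) auto
        also have "\<dots> = (u + v) * bm i" by (simp add: algebra_simps)
        also have "\<dots> = bm i" using uv by simp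
        finally show "am i \<bullet> (u *\<^sub>R x2 + v *\<^sub>R y2) \<le> bm i" by (simp add: inner_add_right)
      qed
      have c3: "\<forall>i<Mp. \<forall>j<Mm. bp i \<noteq> 0 \<longrightarrow> bm j \<noteq> 0 \<longrightarrow>
               (ap i \<bullet> (u *\<^sub>R x1 + v *\<^sub>R y1)) / bp i + (am j \<bullet> (u *\<^sub>R x2 + v *\<^sub>R y2)) / bm j \<le> 1"
      proof (intro allI impI)
        fix i j assume i: "i < Mp" and j: "j < Mm" and b: "bp i \<noteq> 0" "bm j \<noteq> 0"
        have "(ap i \<bullet> x1) / bp i + (am j \<bullet> x2) / bm j \<le> 1"
             "(ap i \<bullet> y1) / bp i + (am j \<bullet> y2) / bm j \<le> 1" using x y xx yy i j b by auto
        hence "u * ((ap i \<bullet> x1) / bp i + (am j \<bullet> x2) / bm j) + v * ((ap i \<bullet> y1) / bp i + (am j \<bullet> y2) / bm j) \<le> u * 1 + v * 1"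
          using uv by (intro add_mono mult_left_mono) auto
        thus "(ap i \<bullet> (u *\<^sub>R x1 + v *\<^sub>R y1)) / bp i + (am j \<bullet> (u *\<^sub>R x2 + v *\<^sub>R y2)) / bm j \<le> 1"
          using uv by (simp add: inner_add_right add_divide_distrib algebra_simps)
      qed
      show "u *\<^sub>R x + v *\<^sub>R y \<in> ?R" using c1 c2 c3 xx yy by simp
    qed
  qed
next
  define Pp where "Pp = {u. \<forall>i<Mp. ap i \<bullet> u \<le> bp i}"
  define Pm where "Pm = {u. \<forall>j<Mm. am j \<bullet> u \<le> bm j}"
  define Sp where "Sp = {\<mu>\<in>Q. \<mu> \<ge> 0}"
  define Sm where "Sm = {\<mu>\<in>Q. \<mu> \<le> 0}"
  have hp: "convex hull (m1 e ` Sp) = Pp" using hrep_p unfolding Pp_def Sp_def by simp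
  have hm: "convex hull (m1 e ` Sm) = Pm" using hrep_m unfolding Pm_def Sm_def by simp
  have bndp: "bounded Pp" unfolding hp[symmetric]
    by (rule compact_imp_bounded, rule finite_imp_compact_convex_hull) (simp add: Sp_def Q_fin)
  have bndm: "bounded Pm" unfolding hm[symmetric]
    by (rule compact_imp_bounded, rule finite_imp_compact_convex_hull) (simp add: Sm_def Q_fin)
  have x0p: "m1 e 0 \<in> Pp" using hp hull_subset Q_zero unfolding Sp_def by fastforce
  have x0m: "m1 e 0 \<in> Pm" using hm hull_subset Q_zero unfolding Sm_def by fastforce
  have linA: "linear (\<lambda>x::real^'n. (x, 0::real^'n))" by (simp add: linear_iff)
  have linB: "linear (\<lambda>x::real^'n. (0::real^'n, x))" by (simp add: linear_iff)
  have A: "?A = (\<lambda>x. (x, 0)) ` (m1 e ` Sp)" unfolding Sp_def by (simp add: image_image)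
  have B: "?B = (\<lambda>x. (0, x)) ` (m1 e ` Sm)" unfolding Sm_def by (simp add: image_image)
  have inA: "(x, 0) \<in> convex hull (?A \<union> ?B)" if "x \<in> Pp" for x
  proof -
    have "(x, 0) \<in> (\<lambda>x. (x, 0)) ` (convex hull (m1 e ` Sp))" using that hp by simp
    hence "(x, 0) \<in> convex hull ?A" by (metis A convex_hull_linear_image[OF linA])
    thus ?thesis using hull_mono[of ?A "?A \<union> ?B"] by blast
  qed
  have inB: "(0, x) \<in> convex hull (?A \<union> ?B)" if "x \<in> Pm" for x
  proof -
    have "(0, x) \<in> (\<lambda>x. (0, x)) ` (convex hull (m1 e ` Sm))" using that hm by simp
    hence "(0, x) \<in> convex hull ?B" by (metis B convex_hull_linear_image[OF linB])
    thus ?thesis using hull_mono[of ?B "?A \<union> ?B"] by blast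
  qed
  show "?R \<subseteq> convex hull (?A \<union> ?B)"
  proof
    fix z assume z: "z \<in> ?R"
    obtain up um where zz: "z = (up, um)" by fastforce
    have c1: "\<forall>i<Mp. ap i \<bullet> up \<le> bp i" and c2: "\<forall>j<Mm. am j \<bullet> um \<le> bm j"
      and c3: "\<forall>i<Mp. \<forall>j<Mm. bp i \<noteq> 0 \<longrightarrow> bm j \<noteq> 0 \<longrightarrow>
               (ap i \<bullet> up) / bp i + (am j \<bullet> um) / bm j \<le> 1" using z zz by auto
    define SA where "SA = insert 0 {ap i \<bullet> up / bp i | i. i < Mp \<and> bp i \<noteq> 0}"
    define SB where "SB = insert 0 {am j \<bullet> um / bm j | j. j < Mm \<and> bm j \<noteq> 0}"
    define \<alpha> where "\<alpha> = Max SA"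
    define \<beta> where "\<beta> = Max SB"
    have fA: "finite SA" unfolding SA_def by simp
    have fB: "finite SB" unfolding SB_def by simp
    have a0: "0 \<le> \<alpha>" unfolding \<alpha>_def using fA by (simp add: SA_def)
    have b0: "0 \<le> \<beta>" unfolding \<beta>_def using fB by (simp add: SB_def)
    have aub: "\<forall>i<Mp. bp i \<noteq> 0 \<longrightarrow> ap i \<bullet> up / bp i \<le> \<alpha>"
      unfolding \<alpha>_def using fA by (auto simp: SA_def intro!: Max_ge)
    have bub: "\<forall>j<Mm. bm j \<noteq> 0 \<longrightarrow> am j \<bullet> um / bm j \<le> \<beta>"
      unfolding \<beta>_def using fB by (auto simp: SB_def intro!: Max_ge)
    have "\<alpha> \<in> SA" unfolding \<alpha>_def by (rule Max_in[OF fA]) (simp add: SA_def)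
    moreover have "\<beta> \<in> SB" unfolding \<beta>_def by (rule Max_in[OF fB]) (simp add: SB_def)
    ultimately have ab: "\<alpha> + \<beta> \<le> 1"
    proof (simp add: SA_def SB_def, elim disjE exE conjE)
      show "\<alpha> = 0 \<Longrightarrow> \<beta> = 0 \<Longrightarrow> \<alpha> + \<beta> \<le> 1" by simp
    next
      fix j assume "\<alpha> = 0" "\<beta> = am j \<bullet> um / bm j" "j < Mm" "bm j \<noteq> 0"
      moreover have "bm j > 0" using bm_nonneg \<open>j < Mm\<close> \<open>bm j \<noteq> 0\<close> by force
      ultimately show "\<alpha> + \<beta> \<le> 1" using c2 by simp
    next
      fix i assume "\<beta> = 0" "\<alpha> = ap i \<bullet> up / bp i" "i < Mp" "bp i \<noteq> 0"
      moreover have "bp i > 0" using bp_nonneg \<open>i < Mp\<close> \<open>bp i \<noteq> 0\<close> by force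
      ultimately show "\<alpha> + \<beta> \<le> 1" using c1 by simp
    next
      fix i j assume "\<alpha> = ap i \<bullet> up / bp i" "i < Mp" "bp i \<noteq> 0"
        "\<beta> = am j \<bullet> um / bm j" "j < Mm" "bm j \<noteq> 0"
      thus "\<alpha> + \<beta> \<le> 1" using c3 by simp
    qed
    obtain x where x: "x \<in> Pp" "up = \<alpha> *\<^sub>R x"
      using scale_lemma[OF bndp[unfolded Pp_def] bp_nonneg x0p[unfolded Pp_def] c1 a0 aub]
      unfolding Pp_def by blast
    have bub': "\<forall>j<Mm. bm j \<noteq> 0 \<longrightarrow> am j \<bullet> um / bm j \<le> 1 - \<alpha>" using bub ab by force
    obtain y where y: "y \<in> Pm" "um = (1 - \<alpha>) *\<^sub>R y"
      using scale_lemma[OF bndm[unfolded Pm_def] bm_nonneg x0m[unfolded Pm_def] c2 _ bub'] ab b0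
      unfolding Pm_def by force
    have "z = \<alpha> *\<^sub>R (x, 0) + (1 - \<alpha>) *\<^sub>R (0, y)" using zz x y by simp
    moreover have "\<alpha> \<le> 1" using ab b0 by simp
    ultimately show "z \<in> convex hull (?A \<union> ?B)"
      using convexD[OF convex_convex_hull inA[OF x(1)] inB[OF y(1)], of \<alpha> "1 - \<alpha>"] a0
      by simp
  qed
qed

end
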